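(* Let $g:\mathbb{R}\to\mathbb{R}$ be $\pi$-periodic. Let $m,n$ be positive integers, $p=\gcd(m,n)$, and $r,q$ positive integers with $m=pq$, $n=pr$. Let $\mu=\pi/n$ and define $h(x)=\prod_{j=0}^{r-1} g(x+jm\mu)$. Then for all $x\in\mathbb{R}$, $$\prod_{k=1}^{p} h\big(x+(k-1)\mu\big)=\prod_{i=0}^{n-1} g(x+i\mu)\quad\text{and}\quad \prod_{i=0}^{n-1} g(x+mi\mu)=h(x)^p.$$ *)

theory Defs
  imports Complex_Main
begin

end

theory Submission
  imports Defs "HOL-Number_Theory.Number_Theory"
begin

lemma per_mult: assumes per: "\<And>x. g (x + pi) = g x"
  shows "g (y + real c * pi) = (g y :: real)"
proof (induction c)
  case 0 then show ?case by simp
next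
  case (Suc c)
  have "y + real (Suc c) * pi = (y + real c * pi) + pi" by (simp add: algebra_simps)
  then show ?case using per[of "y + real c * pi"] Suc by (simp only:)
qed

lemma bij_mod_mult:
  fixes q r :: nat assumes "coprime q r" "r > 0"
  shows "bij_betw (\<lambda>j. j * q mod r) {..<r} {..<r}"
proof -
  have inj: "inj_on (\<lambda>j. j * q mod r) {..<r}"
  proof (rule inj_onI)
    fix a b assume a: "a \<in> {..<r}" and b: "b \<in> {..<r}" and e: "a * q mod r = b * q mod r"
    have "[a * q = b * q] (mod r)" using e by (simp add: cong_def)
    then have "[a = b] (mod r)" using assms(1)
      by (metis cong_mult_rcancel_nat coprime_commute)
    then show "a = b" using a b by (simp add: cong_def)
  qed
  have sub: "(\<lambda>j. j * q mod r) ` {..<r} \<subseteq> {..<r}" using assms(2) by auto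
  have "card ((\<lambda>j. j * q mod r) ` {..<r}) = card {..<r::nat}" using inj by (simp add: card_image)
  then have "(\<lambda>j. j * q mod r) ` {..<r} = {..<r}" using sub by (simp add: card_subset_eq)
  then show ?thesis using inj by (simp add: bij_betw_def)
qed

theorem lemma4p1:
  fixes g :: "real \<Rightarrow> real" and m n p q r :: nat and \<mu> :: real and h :: "real \<Rightarrow> real"
  assumes per: "\<And>x. g (x + pi) = g x"
    and "m > 0" and "n > 0"
    and "p = gcd m n"
    and "q > 0" and "r > 0" and "m = p * q" and "n = p * r"
    and "\<mu> = pi / real n"
    and "h = (\<lambda>x. \<Prod>j = 0..<r. g (x + real j * real m * \<mu>))"
  shows "\<forall>x. (\<Prod>k = 1..p. h (x + (real k - 1) * \<mu>)) = (\<Prod>i = 0..<n. g (x + real i * \<mu>))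
           \<and> (\<Prod>i = 0..<n. g (x + real m * real i * \<mu>)) = h x ^ p"
proof
  fix x
  define G where "G i = g (x + real i * \<mu>)" for i :: nat
  have nmu: "real n * \<mu> = pi" using assms(3,9) by simp
  have Gper: "G (i + n * c) = G i" for i c
  proof -
    have "x + real (i + n * c) * \<mu> = (x + real i * \<mu>) + real c * pi"
      using nmu by (simp add: algebra_simps)
    then show ?thesis unfolding G_def using per_mult[of g, OF per, of "x + real i * \<mu>" c] by (simp only:)
  qed
  have pp: "p > 0" using assms(2,4) by simp
  have cop: "coprime q r"
  proof -
    have "p = p * gcd q r" using assms(4,7,8) by (simp add: gcd_mult_distrib_nat)
    then have "gcd q r = 1" using pp by simp
    then show ?thesis by (metis coprime_iff_gcd_eq_1)
  qed
  have hG: "h (x + real k * \<mu>) = (\<Prod>j<r. G (k + j * m))" for k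
  proof -
    have e: "x + real k * \<mu> + real j * real m * \<mu> = x + real (k + j*m) * \<mu>" for j
      by (simp add: algebra_simps)
    show ?thesis unfolding assms(10) G_def atLeast0LessThan e ..
  qed
  have red: "G (k + j * m) = G (k + p * (j * q mod r))" for k j
  proof -
    have "k + j * m = k + p * (j * q mod r) + n * (j * q div r)"
    proof -
      have "j * q = j * q mod r + r * (j * q div r)" by simp
      then have "p * (j * q) = p * (j * q mod r) + (p * r) * (j * q div r)"
        by (metis add_mult_distrib2 mult.assoc)
      then show ?thesis using assms(7,8) by (simp add: mult.assoc mult.left_commute)
    qed
    then show ?thesis using Gper[of "k + p * (j * q mod r)" "j * q div r"] by (simp only:)
  qed
  have inner: "(\<Prod>j<r. G (k + j * m)) = (\<Prod>s<r. G (k + p * s))" for k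
  proof -
    have "(\<Prod>j<r. G (k + j * m)) = (\<Prod>j<r. G (k + p * (j * q mod r)))"
      using red by simp
    also have "\<dots> = (\<Prod>s<r. G (k + p * s))"
      using prod.reindex_bij_betw[OF bij_mod_mult[OF cop assms(6)], of "\<lambda>s. G (k + p * s)"]
      by simp
    finally show ?thesis .
  qed
  have P1: "(\<Prod>k = 1..p. h (x + (real k - 1) * \<mu>)) = (\<Prod>i = 0..<n. g (x + real i * \<mu>))"
  proof -
    have "(\<Prod>k = 1..p. h (x + (real k - 1) * \<mu>)) = (\<Prod>k<p. h (x + real k * \<mu>))"
      by (simp add: prod.atLeast1_atMost_eq[simplified])
    also have "\<dots> = (\<Prod>k<p. \<Prod>s<r. G (k + p * s))" using hG inner by simp
    also have "\<dots> = (\<Prod>s<r. \<Prod>k<p. G (k + p * s))" by (rule prod.swap)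
    also have "\<dots> = (\<Prod>s<r. prod G {s * p..<s * p + p})"
    proof (rule prod.cong[OF refl])
      fix s show "(\<Prod>k<p. G (k + p * s)) = prod G {s * p..<s * p + p}"
        using prod.shift_bounds_nat_ivl[of G 0 "s*p" p]
        by (simp add: atLeast0LessThan add.commute mult.commute)
    qed
    also have "\<dots> = prod G {..<r * p}" by (rule prod.nat_group)
    also have "\<dots> = (\<Prod>i = 0..<n. g (x + real i * \<mu>))"
      using assms(8) by (simp add: G_def atLeast0LessThan mult.commute)
    finally show ?thesis .
  qed
  have P2: "(\<Prod>i = 0..<n. g (x + real m * real i * \<mu>)) = h x ^ p"
  proof -
    have "(\<Prod>i = 0..<n. g (x + real m * real i * \<mu>)) = (\<Prod>i<p * r. G (m * i))"
      using assms(8) by (simp add: G_def atLeast0LessThan algebra_simps)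
    also have "\<dots> = (\<Prod>a<p. prod (\<lambda>i. G (m * i)) {a * r..<a * r + r})"
      by (simp add: prod.nat_group mult.commute)
    also have "\<dots> = (\<Prod>a<p. \<Prod>b<r. G (m * (b + a * r)))"
    proof (rule prod.cong[OF refl])
      fix a show "prod (\<lambda>i. G (m * i)) {a * r..<a * r + r} = (\<Prod>b<r. G (m * (b + a * r)))"
        using prod.shift_bounds_nat_ivl[of "\<lambda>i. G (m * i)" 0 "a*r" r]
        by (simp add: atLeast0LessThan add.commute)
    qed
    also have "\<dots> = (\<Prod>a<p. \<Prod>b<r. G (0 + b * m))"
    proof -
      have "G (m * (b + a * r)) = G (0 + b * m)" for a b
      proof -
        have "m * (b + a * r) = 0 + b * m + n * (q * a)" using assms(7,8) by (simp add: algebra_simps)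
        then show ?thesis using Gper[of "0 + b * m" "q * a"] by (simp only:)
      qed
      then show ?thesis by simp
    qed
    also have "\<dots> = h x ^ p" using hG[of 0] by simp
    finally show ?thesis .
  qed
  show "(\<Prod>k = 1..p. h (x + (real k - 1) * \<mu>)) = (\<Prod>i = 0..<n. g (x + real i * \<mu>))
           \<and> (\<Prod>i = 0..<n. g (x + real m * real i * \<mu>)) = h x ^ p" using P1 P2 by simp
qed

end
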